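(* Let $0<\alpha<\beta<1$ and $t\geq1$. Let $\mathcal{P}_t'$ be the set of real polynomials $f$ of degree at most $t$ with $f(0)=0$ and $f(1)=1$. Any minimizer $f^\star\in\mathcal{P}_t'$ of \[ \frac{\max_{\lambda\in[0,\alpha]}|f(\lambda)|}{\min_{\lambda\in[\beta,1]}|f(\lambda)|} \] over $\mathcal{P}_t'$ is $t$-equioscillatory on $[0,\alpha]$.
   Context: A polynomial $f$ is called $t$-equioscillatory on an interval $[a,b]$ if there exist points $a\le\gamma_0<\gamma_1<\dots<\gamma_{t-1}\le b$ such that $|f(\gamma_s)|=\max_{\lambda\in[a,b]}|f(\lambda)|$ for all $0\le s\le t-1$ and $f(\gamma_0)=-f(\gamma_1)=f(\gamma_2)=-f(\gamma_3)=\cdots$. The objective is taken to be $+\infty$ when the denominator vanishes. *)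

theory Defs
  imports "HOL-Analysis.Analysis" "HOL-Computational_Algebra.Polynomial" "HOL-Library.Extended_Real"
begin

text \<open>Maximum of |f| on [a,b] (attained, since polynomials are continuous).\<close>
definition max_abs_on :: "real poly \<Rightarrow> real \<Rightarrow> real \<Rightarrow> real" where
  "max_abs_on f a b = (SUP x\<in>{a..b}. \<bar>poly f x\<bar>)"

definition min_abs_on :: "real poly \<Rightarrow> real \<Rightarrow> real \<Rightarrow> real" where
  "min_abs_on f a b = (INF x\<in>{a..b}. \<bar>poly f x\<bar>)"

definition Pt' :: "nat \<Rightarrow> real poly set" where
  "Pt' t = {f. degree f \<le> t \<and> poly f 0 = 0 \<and> poly f 1 = 1}"

definition objective :: "real \<Rightarrow> real \<Rightarrow> real poly \<Rightarrow> ereal" where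
  "objective \<alpha> \<beta> f =
     (if min_abs_on f \<beta> 1 = 0 then \<infinity>
      else ereal (max_abs_on f 0 \<alpha> / min_abs_on f \<beta> 1))"

definition equioscillatory :: "nat \<Rightarrow> real poly \<Rightarrow> real \<Rightarrow> real \<Rightarrow> bool" where
  "equioscillatory t f a b \<longleftrightarrow>
     (\<exists>\<gamma> :: nat \<Rightarrow> real.
        (\<forall>s<t. a \<le> \<gamma> s \<and> \<gamma> s \<le> b) \<and>
        (\<forall>s. s + 1 < t \<longrightarrow> \<gamma> s < \<gamma> (s + 1)) \<and>
        (\<forall>s<t. \<bar>poly f (\<gamma> s)\<bar> = max_abs_on f a b) \<and>
        (\<forall>s. s + 1 < t \<longrightarrow> poly f (\<gamma> (s + 1)) = - poly f (\<gamma> s)))"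

end

theory Submission
  imports Defs
begin

lemma attain_max:
  assumes "a \<le> b"
  shows "\<exists>x\<in>{a..b}. max_abs_on g a b = \<bar>poly g x\<bar> \<and> (\<forall>y\<in>{a..b}. \<bar>poly g y\<bar> \<le> max_abs_on g a b)"
proof -
  have c: "continuous_on {a..b} (\<lambda>x. \<bar>poly g x\<bar>)"
    by (intro continuous_intros)
  obtain x where x: "x \<in> {a..b}" "\<forall>y\<in>{a..b}. \<bar>poly g y\<bar> \<le> \<bar>poly g x\<bar>"
    using continuous_attains_sup[OF compact_Icc _ c] assms by auto
  have "max_abs_on g a b = \<bar>poly g x\<bar>"
    unfolding max_abs_on_def using x by (intro cSup_eq_maximum) auto
  with x show ?thesis by auto
qed

lemma attain_min:
  assumes "a \<le> b"
  shows "\<exists>x\<in>{a..b}. min_abs_on g a b = \<bar>poly g x\<bar> \<and> (\<forall>y\<in>{a..b}. min_abs_on g a b \<le> \<bar>poly g y\<bar>)"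
proof -
  have c: "continuous_on {a..b} (\<lambda>x. \<bar>poly g x\<bar>)"
    by (intro continuous_intros)
  obtain x where x: "x \<in> {a..b}" "\<forall>y\<in>{a..b}. \<bar>poly g x\<bar> \<le> \<bar>poly g y\<bar>"
    using continuous_attains_inf[OF compact_Icc _ c] assms by auto
  have "min_abs_on g a b = \<bar>poly g x\<bar>"
    unfolding min_abs_on_def using x by (intro cInf_eq_minimum) auto
  with x show ?thesis by auto
qed

lemma poly_same_sign:
  fixes q :: "real poly"
  assumes "x \<le> y" "\<forall>u. x \<le> u \<and> u \<le> y \<longrightarrow> poly q u \<noteq> 0"
  shows "poly q x * poly q y > 0"
proof (rule ccontr)
  assume "\<not> ?thesis"
  moreover have "poly q x \<noteq> 0" "poly q y \<noteq> 0" using assms by auto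
  ultimately have "poly q x * poly q y < 0" by (simp add: not_less order_le_less)
  moreover have "x < y" using assms \<open>poly q x * poly q y < 0\<close> 
    by (metis mult_less_0_iff not_less_iff_gr_or_eq order_le_less)
  ultimately obtain u where "u > x" "u < y" "poly q u = 0" using poly_IVT by blast
  with assms show False by auto
qed


definition chain :: "real poly \<Rightarrow> real \<Rightarrow> real \<Rightarrow> real \<Rightarrow> nat \<Rightarrow> bool" where
"chain f M a b n \<longleftrightarrow> (\<exists>\<gamma>. (\<forall>s<n. a \<le> \<gamma> s \<and> \<gamma> s \<le> b) \<and> (\<forall>s. s+1<n \<longrightarrow> \<gamma> s < \<gamma> (s+1))
   \<and> (\<forall>s<n. \<bar>poly f (\<gamma> s)\<bar> = M) \<and> (\<forall>s. s+1<n \<longrightarrow> poly f (\<gamma>(s+1)) = - poly f (\<gamma> s)))"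

lemma chain_cons:
  assumes "\<forall>s<n. a' \<le> \<gamma> s \<and> \<gamma> s \<le> b" "\<forall>s. s+1<n \<longrightarrow> \<gamma> s < \<gamma> (s+1)"
    "\<forall>s<n. \<bar>poly f (\<gamma> s)\<bar> = M" "\<forall>s. s+1<n \<longrightarrow> poly f (\<gamma>(s+1)) = - poly f (\<gamma> s)"
    "0<n" "a \<le> x0" "x0 < \<gamma> 0" "a \<le> a'" "\<bar>poly f x0\<bar> = M" "poly f (\<gamma> 0) = - poly f x0"
  shows "chain f M a b (Suc n)"
  unfolding chain_def
proof (rule exI[of _ "\<lambda>s. if s = 0 then x0 else \<gamma> (s - 1)"], intro conjI allI impI)
  fix s assume s: "s < Suc n"
  have "a \<le> (if s = 0 then x0 else \<gamma> (s - 1)) \<and> (if s = 0 then x0 else \<gamma> (s - 1)) \<le> b"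
  proof (cases s)
    case 0 then show ?thesis using assms(6,7) assms(1)[rule_format, of 0] assms(5) by simp
  next
    case (Suc k) then show ?thesis using assms(1)[rule_format, of k] assms(8) s by simp
  qed
  then show "a \<le> (if s = 0 then x0 else \<gamma> (s - 1))" "(if s = 0 then x0 else \<gamma> (s - 1)) \<le> b" by auto
  show "\<bar>poly f (if s = 0 then x0 else \<gamma> (s - 1))\<bar> = M"
  proof (cases s)
    case 0 then show ?thesis using assms(9) by simp
  next
    case (Suc k) then show ?thesis using assms(3)[rule_format, of k] s by simp
  qed
next
  fix s assume s: "s + 1 < Suc n"
  show "(if s = 0 then x0 else \<gamma> (s - 1)) < (if s + 1 = 0 then x0 else \<gamma> (s + 1 - 1))"
  proof (cases s)
    case 0 then show ?thesis using assms(7) by simp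
  next
    case (Suc k) then show ?thesis using assms(2)[rule_format, of k] s by simp
  qed
  show "poly f (if s + 1 = 0 then x0 else \<gamma> (s + 1 - 1)) = - poly f (if s = 0 then x0 else \<gamma> (s - 1))"
  proof (cases s)
    case 0 then show ?thesis using assms(10) by simp
  next
    case (Suc k) then show ?thesis using assms(4)[rule_format, of k] s by simp
  qed
qed

lemma compact_level: "compact {x\<in>{a..b}. poly (f::real poly) x = v}"
proof -
  have "closed {x. poly f x = v}"
    by (rule closed_Collect_eq) (auto intro!: continuous_on_poly continuous_on_id continuous_on_const)
  have eq: "{x\<in>{a..b}. poly f x = v} = {a..b} \<inter> {x. poly f x = v}" by auto
  show ?thesis unfolding eq by (rule compact_Int_closed[OF compact_Icc \<open>closed {x. poly f x = v}\<close>])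
qed

lemma compact_alevel: "compact {x\<in>{a..b}. \<bar>poly (f::real poly) x\<bar> = v}"
proof -
  have "closed {x. \<bar>poly f x\<bar> = v}"
    by (rule closed_Collect_eq) (auto intro!: continuous_on_rabs continuous_on_poly continuous_on_id continuous_on_const)
  have eq: "{x\<in>{a..b}. \<bar>poly f x\<bar> = v} = {a..b} \<inter> {x. \<bar>poly f x\<bar> = v}" by auto
  show ?thesis unfolding eq by (rule compact_Int_closed[OF compact_Icc \<open>closed {x. \<bar>poly f x\<bar> = v}\<close>])
qed


lemma absE: "\<bar>u::real\<bar> = \<bar>v\<bar> \<Longrightarrow> u = v \<or> u = - v" by (auto simp: abs_if split: if_splits)

lemma L:
  fixes f :: "real poly"
  assumes M: "M > 0"
  shows "\<not> chain f M a b (m+2) \<Longrightarrow> \<exists>q. degree q \<le> m \<and>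
    (\<forall>x\<in>{a..b}. \<bar>poly f x\<bar> = M \<longrightarrow> poly q x * poly f x > 0) \<and>
    (\<forall>x. poly q x = 0 \<longrightarrow> x \<le> b) \<and>
    (\<forall>x. (\<forall>e\<in>{a..b}. \<bar>poly f e\<bar> = M \<longrightarrow> x \<le> e) \<longrightarrow> poly q x \<noteq> 0)"
proof (induction m arbitrary: a rule: less_induct)
  case (less m a)
  define E where "E = {x\<in>{a..b}. \<bar>poly f x\<bar> = M}"
  show ?case
  proof (cases "E = {}")
    case True
    then show ?thesis by (intro exI[of _ "[:1:]"]) (auto simp: E_def)
  next
    case False
    obtain x0 where x0: "x0 \<in> E" "\<forall>e\<in>E. x0 \<le> e"
      using compact_attains_inf[OF compact_alevel[of a b f M] False[unfolded E_def]] E_def by auto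
    define v0 where "v0 = poly f x0"
    have av0: "\<bar>v0\<bar> = M" "a \<le> x0" "x0 \<le> b" using x0 by (auto simp: E_def v0_def)
    have v0nz: "v0 \<noteq> 0" using av0 M by auto
    have Eval: "\<And>x. x \<in> E \<Longrightarrow> poly f x = v0 \<or> poly f x = - v0"
      using av0 by (intro absE) (auto simp: E_def)
    define F where "F = {x\<in>{a..b}. poly f x = - v0}"
    show ?thesis
    proof (cases "F = {}")
      case True
      have hv: "\<forall>x\<in>E. poly f x = v0"
      proof
        fix x assume xE: "x \<in> E"
        show "poly f x = v0"
        proof (rule ccontr)
          assume "poly f x \<noteq> v0" then have "poly f x = -v0" using Eval[OF xE] by blast
          then have "x \<in> F" using xE unfolding E_def F_def by blast
          then show False using True by blast
        qed
      qed
      let ?q = "[:v0:]"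
      have 1: "degree ?q \<le> m" by simp
      have 2: "\<forall>x\<in>{a..b}. \<bar>poly f x\<bar> = M \<longrightarrow> poly ?q x * poly f x > 0"
      proof (intro ballI impI)
        fix x assume "x \<in> {a..b}" "\<bar>poly f x\<bar> = M"
        then have "x \<in> E" by (simp add: E_def)
        then have "poly f x = v0" using hv by blast
        then show "poly ?q x * poly f x > 0" using v0nz by (auto simp: zero_less_mult_iff linorder_neq_iff)
      qed
      have 3: "\<forall>x. poly ?q x = 0 \<longrightarrow> x \<le> b" using v0nz by simp
      have 4: "\<forall>x. (\<forall>e\<in>{a..b}. \<bar>poly f e\<bar> = M \<longrightarrow> x \<le> e) \<longrightarrow> poly ?q x \<noteq> 0" using v0nz by simp
      show ?thesis by (rule exI[of _ ?q]) (intro conjI 1 2 3 4)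
    next
      case False
      have "compact F" unfolding F_def by (rule compact_level[of a b f "- v0"])
      from compact_attains_inf[OF this False] obtain y where y: "y \<in> F" "\<forall>e\<in>F. y \<le> e"
        by blast
      have yE: "y \<in> E" using y av0 by (auto simp: F_def E_def)
      have fy: "poly f y = - v0" "a \<le> y" "y \<le> b" using y by (auto simp: F_def)
      have x0y: "x0 < y"
      proof -
        have "x0 \<le> y" using x0(2) yE by auto
        moreover have "x0 \<noteq> y" using fy(1) v0nz unfolding v0_def by auto
        ultimately show ?thesis by simp
      qed
      have mpos: "m > 0"
      proof (rule ccontr)
        assume "\<not> m > 0"
        then have m0: "m = 0" by simp
        have "chain f M a b (Suc 1)"
        proof (rule chain_cons[of 1 a "\<lambda>_. y" b f M a x0])
          have "\<bar>poly f y\<bar> = M" using yE unfolding E_def by blast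
          then show "\<forall>s<1. \<bar>poly f ((\<lambda>_. y) s)\<bar> = M" by simp
          show "\<forall>s<1. a \<le> (\<lambda>_. y) s \<and> (\<lambda>_. y) s \<le> b" using fy by simp
          show "\<bar>poly f x0\<bar> = M" using av0 v0_def by simp
          show "poly f ((\<lambda>_. y) 0) = - poly f x0" using fy v0_def by simp
        qed (use x0y av0 in simp_all)
        with less.prems m0 show False by simp
      qed
      define G where "G = {x\<in>{a..y}. poly f x = v0}"
      have x0G: "x0 \<in> G" using av0 x0y by (auto simp: G_def v0_def)
      then have "G \<noteq> {}" by auto
      have "compact G" unfolding G_def by (rule compact_level[of a y f v0])
      from compact_attains_sup[OF this \<open>G \<noteq> {}\<close>] obtain z where z: "z \<in> G" "\<forall>e\<in>G. e \<le> z"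
        by blast
      have zG: "z \<le> y" "poly f z = v0" using z(1) unfolding G_def by auto
      have "z \<noteq> y" using zG(2) fy(1) v0nz by auto
      then have zy: "z < y" "x0 \<le> z" using zG(1) z(2) x0G by auto
      define r where "r = (z + y) / 2"
      have r: "z < r" "r < y" "x0 < r" "a < r" using zy av0 by (auto simp: r_def)
      have e2: "poly f x = v0" if x: "x \<in> E" "x < y" for x
      proof (rule ccontr)
        assume "poly f x \<noteq> v0"
        then have "poly f x = -v0" using Eval[OF x(1)] by blast
        then have "x \<in> F" using x(1) unfolding E_def F_def by blast
        then have "y \<le> x" using y(2) by blast
        then show False using x(2) by simp
      qed
      have e4: "\<And>x. x \<in> E \<Longrightarrow> r \<le> x \<Longrightarrow> y \<le> x"
      proof -
        fix x assume x: "x \<in> E" "r \<le> x"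
        show "y \<le> x"
        proof (rule ccontr)
          assume "\<not> y \<le> x"
          then have "x \<in> G" using e2[OF x(1)] x by (auto simp: E_def G_def)
          then have "x \<le> z" using z(2) by blast
          then show False using r x by linarith
        qed
      qed
      have nochain: "\<not> chain f M r b ((m - 1) + 2)"
      proof
        assume "chain f M r b ((m - 1) + 2)"
        then obtain \<gamma> where g: "\<forall>s<m+1. r \<le> \<gamma> s \<and> \<gamma> s \<le> b" "\<forall>s. s+1<m+1 \<longrightarrow> \<gamma> s < \<gamma> (s+1)"
          "\<forall>s<m+1. \<bar>poly f (\<gamma> s)\<bar> = M" "\<forall>s. s+1<m+1 \<longrightarrow> poly f (\<gamma>(s+1)) = - poly f (\<gamma> s)"
          unfolding chain_def using mpos by (auto simp: Suc_diff_Suc)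
        have "r \<le> \<gamma> 0 \<and> \<gamma> 0 \<le> b" "\<bar>poly f (\<gamma> 0)\<bar> = M" using g(1,3) by simp_all
        then have g0E: "\<gamma> 0 \<in> E" using r unfolding E_def by simp
        have yg0: "y \<le> \<gamma> 0" using e4[OF g0E] g(1) by auto
        have "chain f M a b (Suc (m+1))"
        proof (cases "poly f (\<gamma> 0) = - v0")
          case True
          show ?thesis
            by (rule chain_cons[OF g(1-4), of a x0]) (use True x0y yg0 r av0 mpos in \<open>simp_all add: v0_def\<close>)
        next
          case False
          then have "poly f (\<gamma> 0) = v0" using Eval[OF g0E] by auto
          then have "y < \<gamma> 0" using yg0 fy v0nz by (auto simp: order_le_less)
          moreover have "\<bar>poly f y\<bar> = M" using yE unfolding E_def by blast
          ultimately show ?thesis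
            by (intro chain_cons[OF g(1-4), of a y]) (use \<open>poly f (\<gamma> 0) = v0\<close> fy r mpos in simp_all)
        qed
        with less.prems show False by simp
      qed
      have "\<exists>q. degree q \<le> m - 1 \<and>
        (\<forall>x\<in>{r..b}. \<bar>poly f x\<bar> = M \<longrightarrow> poly q x * poly f x > 0) \<and>
        (\<forall>x. poly q x = 0 \<longrightarrow> x \<le> b) \<and>
        (\<forall>x. (\<forall>e\<in>{r..b}. \<bar>poly f e\<bar> = M \<longrightarrow> x \<le> e) \<longrightarrow> poly q x \<noteq> 0)"
        using less.IH[of "m - 1" r] nochain mpos by simp
      then obtain q' where q': "degree q' \<le> m - 1"
        "\<forall>x\<in>{r..b}. \<bar>poly f x\<bar> = M \<longrightarrow> poly q' x * poly f x > 0"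
        "\<forall>x. poly q' x = 0 \<longrightarrow> x \<le> b"
        "\<forall>x. (\<forall>e\<in>{r..b}. \<bar>poly f e\<bar> = M \<longrightarrow> x \<le> e) \<longrightarrow> poly q' x \<noteq> 0"
        by blast
      have ylow: "\<forall>e\<in>{r..b}. \<bar>poly f e\<bar> = M \<longrightarrow> y \<le> e"
      proof (intro ballI impI)
        fix e assume e: "e \<in> {r..b}" "\<bar>poly f e\<bar> = M"
        then have "e \<in> E" "r \<le> e" using r unfolding E_def by auto
        then show "y \<le> e" using e4 by blast
      qed
      have "y \<in> {r..b}" "\<bar>poly f y\<bar> = M" using fy r yE unfolding E_def by auto
      then have "poly q' y * poly f y > 0" using q'(2) by blast
      then have q'y: "poly q' y * (- v0) > 0" using fy(1) by simp
      have q'nz: "poly q' u \<noteq> 0" if "u \<le> y" for u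
      proof -
        have "\<forall>e\<in>{r..b}. \<bar>poly f e\<bar> = M \<longrightarrow> u \<le> e"
        proof (intro ballI impI)
          fix e assume "e \<in> {r..b}" "\<bar>poly f e\<bar> = M"
          then have "y \<le> e" using ylow by blast
          then show "u \<le> e" using that by simp
        qed
        then show ?thesis using q'(4) by blast
      qed
      have q'x: "poly q' x * poly q' y > 0" if "x \<le> y" for x
      proof (rule poly_same_sign[OF that])
        show "\<forall>u. x \<le> u \<and> u \<le> y \<longrightarrow> poly q' u \<noteq> 0" using q'nz by blast
      qed
      define q where "q = q' * [:-r, 1:]"
      show ?thesis
      proof (intro exI[of _ q] conjI allI impI ballI)
        have "degree q \<le> degree q' + degree [:-r, 1:]" unfolding q_def by (rule degree_mult_le)
        then show "degree q \<le> m" using q'(1) mpos by simp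
      next
        fix x assume "poly q x = 0"
        then have "poly q' x = 0 \<or> x = r" by (simp add: q_def)
        then show "x \<le> b" using q'(3) r fy by auto
      next
        fix x assume "\<forall>e\<in>{a..b}. \<bar>poly f e\<bar> = M \<longrightarrow> x \<le> e"
        then have "x \<le> x0" using x0(1) unfolding E_def by blast
        then have "\<forall>e\<in>{r..b}. \<bar>poly f e\<bar> = M \<longrightarrow> x \<le> e" using r by auto
        then have "poly q' x \<noteq> 0" using q'(4) by blast
        moreover have "x - r \<noteq> 0" using \<open>x \<le> x0\<close> r by simp
        ultimately show "poly q x \<noteq> 0" by (simp add: q_def)
      next
        fix x assume x: "x \<in> {a..b}" "\<bar>poly f x\<bar> = M"
        then have xE: "x \<in> E" by (simp add: E_def)
        show "poly q x * poly f x > 0"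
        proof (cases "r \<le> x")
          case True
          then have "y \<le> x" using e4 xE by auto
          then have "poly q' x * poly f x > 0" using q'(2) x True by auto
          moreover have "x - r > 0" using \<open>y \<le> x\<close> r by auto
          ultimately have "(poly q' x * poly f x) * (x - r) > 0" by (rule mult_pos_pos)
          then show ?thesis by (simp add: q_def algebra_simps)
        next
          case False
          then have fx: "poly f x = v0" using e2 xE r by auto
          have "poly q' x * poly q' y > 0" using q'x False r by auto
          then have "(poly q' x * poly q' y) * (poly q' y * (-v0)) > 0" using q'y by (rule mult_pos_pos)
          then have "(poly q' x * (-v0)) * (poly q' y * poly q' y) > 0" by (simp only: ac_simps)
          moreover have "0 \<le> poly q' y * poly q' y" by simp
          ultimately have "poly q' x * (-v0) > 0" by (meson mult_nonpos_nonneg not_less)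
          moreover have "r - x > 0" using False by auto
          ultimately have "(poly q' x * (-v0)) * (r - x) > 0" by (rule mult_pos_pos)
          then show ?thesis by (simp add: q_def fx algebra_simps)
        qed
      qed
    qed
  qed
qed


lemma aux1:
  fixes e F M :: real
  assumes "\<bar>e\<bar> \<le> M/2" "\<bar>F\<bar> \<le> M" "\<bar>F\<bar> > M/2" "e * F > 0"
  shows "\<bar>F - e\<bar> < M"
proof -
  have "(e > 0 \<and> F > 0) \<or> (e < 0 \<and> F < 0)" using assms(4) by (simp add: zero_less_mult_iff)
  then show ?thesis using assms(1-3) by (auto simp: abs_if split: if_split_asm)
qed

lemma aux2:
  fixes e F M M' :: real
  assumes "\<bar>e\<bar> \<le> (M - M')/2" "\<bar>F\<bar> \<le> M'" "M' < M"
  shows "\<bar>F - e\<bar> < M"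
proof -
  have "\<bar>F - e\<bar> \<le> \<bar>F\<bar> + \<bar>e\<bar>" by (rule abs_triangle_ineq4)
  also have "\<dots> \<le> M' + (M - M')/2" using assms(2,1) by (rule add_mono)
  also have "\<dots> < M" using assms(3) by (simp add: field_simps)
  finally show ?thesis .
qed

lemma perturb:
  fixes f p :: "real poly"
  assumes a: "0 \<le> \<alpha>" and Mpos: "M > 0" and bnd: "\<forall>x\<in>{0..\<alpha>}. \<bar>poly f x\<bar> \<le> M"
    and E: "\<forall>x\<in>{0..\<alpha>}. \<bar>poly f x\<bar> = M \<longrightarrow> poly p x * poly f x > 0"
  shows "\<exists>\<epsilon>>0. \<forall>x\<in>{0..\<alpha>}. \<bar>poly f x - \<epsilon> * poly p x\<bar> < M"
proof -
  obtain xp where xp: "xp \<in> {0..\<alpha>}" "\<forall>y\<in>{0..\<alpha>}. \<bar>poly p y\<bar> \<le> max_abs_on p 0 \<alpha>"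
    using attain_max[OF a, of p] by blast
  define P where "P = max_abs_on p 0 \<alpha> + 1"
  have Ppos: "P > 0" using xp unfolding P_def by (meson abs_ge_zero less_add_one order_le_less_trans order_trans)
  have pP: "\<forall>y\<in>{0..\<alpha>}. \<bar>poly p y\<bar> \<le> P" using xp(2) unfolding P_def by force
  define K where "K = {x\<in>{0..\<alpha>}. \<bar>poly f x\<bar> \<le> M/2 \<or> poly p x * poly f x \<le> 0}"
  obtain M' where M': "M' < M" "\<forall>x\<in>K. \<bar>poly f x\<bar> \<le> M'"
  proof (cases "K = {}")
    case True
    then show ?thesis using that[of "M/2"] Mpos by simp
  next
    case False
    have cl: "closed {x. \<bar>poly f x\<bar> \<le> M/2 \<or> poly p x * poly f x \<le> 0}"
      by (intro closed_Collect_disj closed_Collect_le)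
        (auto intro!: continuous_on_rabs continuous_on_poly continuous_on_id continuous_on_const continuous_on_mult)
    have eq: "K = {0..\<alpha>} \<inter> {x. \<bar>poly f x\<bar> \<le> M/2 \<or> poly p x * poly f x \<le> 0}" unfolding K_def by auto
    have "compact K" unfolding eq by (rule compact_Int_closed[OF compact_Icc cl])
    moreover have "continuous_on K (\<lambda>x. \<bar>poly f x\<bar>)"
      by (auto intro!: continuous_on_rabs continuous_on_poly continuous_on_id)
    ultimately obtain k where k: "k \<in> K" "\<forall>y\<in>K. \<bar>poly f y\<bar> \<le> \<bar>poly f k\<bar>"
      using continuous_attains_sup[of K "\<lambda>x. \<bar>poly f x\<bar>"] False by blast
    have k0: "k \<in> {0..\<alpha>}" using k(1) unfolding K_def by blast
    have "\<bar>poly f k\<bar> \<noteq> M"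
    proof
      assume h: "\<bar>poly f k\<bar> = M"
      then have "poly p k * poly f k > 0" using E k0 by blast
      moreover have "\<bar>poly f k\<bar> > M/2" using h Mpos by simp
      ultimately show False using k(1) unfolding K_def by auto
    qed
    then have "\<bar>poly f k\<bar> < M" using bnd k0 by force
    then show ?thesis using that[of "\<bar>poly f k\<bar>"] k(2) by blast
  qed
  define \<epsilon> where "\<epsilon> = min M (M - M') / (2 * P)"
  have epos: "\<epsilon> > 0" unfolding \<epsilon>_def using Mpos M'(1) Ppos by simp
  have eP: "\<epsilon> * P = min M (M - M') / 2" unfolding \<epsilon>_def using Ppos by simp
  show ?thesis
  proof (intro exI[of _ \<epsilon>] conjI ballI epos)
    fix x assume x: "x \<in> {0..\<alpha>}"
    have "\<bar>\<epsilon> * poly p x\<bar> = \<epsilon> * \<bar>poly p x\<bar>" using epos by (simp add: abs_mult)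
    also have "\<dots> \<le> \<epsilon> * P" using pP x epos by (simp add: mult_left_mono)
    finally have ee: "\<bar>\<epsilon> * poly p x\<bar> \<le> min M (M - M') / 2" using eP by simp
    show "\<bar>poly f x - \<epsilon> * poly p x\<bar> < M"
    proof (cases "x \<in> K")
      case True
      show ?thesis by (rule aux2[OF _ _ M'(1)]) (use ee M'(2) True in auto)
    next
      case False
      then have h: "\<bar>poly f x\<bar> > M/2" "poly p x * poly f x > 0" using x unfolding K_def by auto
      have "(\<epsilon> * poly p x) * poly f x > 0" using h(2) epos by (simp add: mult.assoc)
      then show ?thesis by (intro aux1) (use ee h bnd x in auto)
    qed
  qed
qed


theorem lemma3:
  fixes \<alpha> \<beta> :: real and t :: nat and fstar :: "real poly"
  assumes "0 < \<alpha>" and "\<alpha> < \<beta>" and "\<beta> < 1" and "t \<ge> 1"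
    and "fstar \<in> Pt' t"
    and "\<forall>g\<in>Pt' t. objective \<alpha> \<beta> fstar \<le> objective \<alpha> \<beta> g"
  shows "equioscillatory t fstar 0 \<alpha>"
proof -
  note a = assms(1) and ab = assms(2) and b1 = assms(3) and t1 = assms(4) and opt = assms(6)
  have f: "degree fstar \<le> t" "poly fstar 0 = 0" "poly fstar 1 = 1" using assms(5) unfolding Pt'_def by auto
  define M where "M = max_abs_on fstar 0 \<alpha>"
  obtain xm where xm: "xm \<in> {0..\<alpha>}" "M = \<bar>poly fstar xm\<bar>" "\<forall>y\<in>{0..\<alpha>}. \<bar>poly fstar y\<bar> \<le> M"
    using attain_max[of 0 \<alpha> fstar] a unfolding M_def by auto
  show ?thesis
  proof (cases "t = 1")
    case True
    show ?thesis unfolding equioscillatory_def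
      by (rule exI[of _ "\<lambda>_. xm"]) (use xm True M_def in auto)
  next
    case False
    then have t2: "t \<ge> 2" using t1 by simp
    show ?thesis
    proof (rule ccontr)
      assume neq: "\<not> equioscillatory t fstar 0 \<alpha>"
      have tt: "t - 2 + 2 = t" using t2 by simp
      have nochain: "\<not> chain fstar M 0 \<alpha> ((t-2)+2)"
        using neq unfolding tt chain_def equioscillatory_def M_def by simp
      have fnz: "fstar \<noteq> 0" using f(3) by auto
      have Mpos: "M > 0"
      proof (rule ccontr)
        assume "\<not> M > 0"
        then have "\<forall>x\<in>{0..\<alpha>}. poly fstar x = 0" using xm(3) by force
        then have "{0..\<alpha>} \<subseteq> {x. poly fstar x = 0}" by auto
        moreover have "finite {x. poly fstar x = 0}" using fnz by (rule poly_roots_finite)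
        ultimately have "finite {0..\<alpha>}" by (rule finite_subset)
        then show False using infinite_Icc[OF a] by simp
      qed
      have "\<exists>q. degree q \<le> t - 2 \<and>
        (\<forall>x\<in>{0..\<alpha>}. \<bar>poly fstar x\<bar> = M \<longrightarrow> poly q x * poly fstar x > 0) \<and>
        (\<forall>x. poly q x = 0 \<longrightarrow> x \<le> \<alpha>) \<and>
        (\<forall>x. (\<forall>e\<in>{0..\<alpha>}. \<bar>poly fstar e\<bar> = M \<longrightarrow> x \<le> e) \<longrightarrow> poly q x \<noteq> 0)"
        by (rule L[OF Mpos nochain])
      then obtain q where q: "degree q \<le> t - 2"
        "\<forall>x\<in>{0..\<alpha>}. \<bar>poly fstar x\<bar> = M \<longrightarrow> poly q x * poly fstar x > 0"
        "\<forall>x. poly q x = 0 \<longrightarrow> x \<le> \<alpha>" by blast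
      define g1 where "g1 = ([:0, 1:] :: real poly)"
      have g1P: "g1 \<in> Pt' t" using t1 unfolding Pt'_def g1_def by simp
      have "\<beta> \<le> min_abs_on g1 \<beta> 1" unfolding min_abs_on_def
        by (rule cINF_greatest) (use b1 in \<open>auto simp: g1_def\<close>)
      then have g1nz: "min_abs_on g1 \<beta> 1 \<noteq> 0" using a ab by auto
      have "objective \<alpha> \<beta> fstar \<le> objective \<alpha> \<beta> g1" using opt g1P by blast
      then have "objective \<alpha> \<beta> fstar \<noteq> \<infinity>" using g1nz unfolding objective_def by auto
      then have mnz: "min_abs_on fstar \<beta> 1 \<noteq> 0" unfolding objective_def by auto
      define m where "m = min_abs_on fstar \<beta> 1"
      obtain xn where xn: "xn \<in> {\<beta>..1}" "m = \<bar>poly fstar xn\<bar>" "\<forall>y\<in>{\<beta>..1}. m \<le> \<bar>poly fstar y\<bar>"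
        using attain_min[of \<beta> 1 fstar] b1 unfolding m_def by auto
      have mpos: "m > 0" using mnz xn(2) unfolding m_def by simp
      have objf: "objective \<alpha> \<beta> fstar = ereal (M / m)"
        using mnz unfolding objective_def M_def m_def by simp
      have fne: "poly fstar u \<noteq> 0" if "u \<in> {\<beta>..1}" for u
        using xn(3) that mpos by force
      have fpos: "poly fstar u > 0" if u: "u \<in> {\<beta>..1}" for u
      proof -
        have "poly fstar u * poly fstar 1 > 0"
          by (rule poly_same_sign) (use u fne in auto)
        then show ?thesis using f(3) by simp
      qed
      have qs: "poly q u * poly q 1 > 0" if u: "u \<in> {\<beta>..1}" for u
      proof (rule poly_same_sign)
        show "u \<le> 1" using u by simp
        show "\<forall>w. u \<le> w \<and> w \<le> 1 \<longrightarrow> poly q w \<noteq> 0" using q(3) u ab by force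
      qed
      have q1: "poly q 1 \<noteq> 0" using q(3) ab b1 by force
      have Epos: "x > 0" if "x \<in> {0..\<alpha>}" "\<bar>poly fstar x\<bar> = M" for x
      proof -
        have "x \<noteq> 0" using that f(2) Mpos by auto
        then show ?thesis using that by simp
      qed
      obtain p where p: "degree p \<le> t" "poly p 0 = 0"
        "\<forall>x\<in>{0..\<alpha>}. \<bar>poly fstar x\<bar> = M \<longrightarrow> poly p x * poly fstar x > 0"
        "\<forall>u\<in>{\<beta>..1}. poly p u \<le> 0"
      proof (cases "poly q 1 < 0")
        case True
        define p where "p = [:0, 1:] * q"
        show ?thesis
        proof (rule that[of p])
          have "degree p \<le> degree [:0, 1::real:] + degree q" unfolding p_def by (rule degree_mult_le)
          then show "degree p \<le> t" using q(1) t2 by simp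
          show "poly p 0 = 0" by (simp add: p_def)
          show "\<forall>x\<in>{0..\<alpha>}. \<bar>poly fstar x\<bar> = M \<longrightarrow> poly p x * poly fstar x > 0"
          proof (intro ballI impI)
            fix x assume x: "x \<in> {0..\<alpha>}" "\<bar>poly fstar x\<bar> = M"
            have "poly q x * poly fstar x > 0" using q(2) x by blast
            then have "x * (poly q x * poly fstar x) > 0" using Epos[OF x] by (rule mult_pos_pos[rotated])
            then show "poly p x * poly fstar x > 0" by (simp add: p_def mult.assoc)
          qed
          show "\<forall>u\<in>{\<beta>..1}. poly p u \<le> 0"
          proof
            fix u assume u: "u \<in> {\<beta>..1}"
            have "poly q u < 0" using qs[OF u] True by (simp add: mult_less_0_iff zero_less_mult_iff)
            moreover have "u > 0" using u a ab by simp
            ultimately show "poly p u \<le> 0" by (simp add: p_def mult_pos_neg order_less_imp_le)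
          qed
        qed
      next
        case False
        then have qp: "poly q 1 > 0" using q1 by simp
        define w where "w = (\<alpha> + \<beta>) / 2"
        define p where "p = [:0, 1:] * q * [:w, -1:]"
        show ?thesis
        proof (rule that[of p])
          have "degree p \<le> degree ([:0, 1::real:] * q) + degree [:w, -1:]" unfolding p_def by (rule degree_mult_le)
          moreover have "degree ([:0, 1::real:] * q) \<le> degree [:0, 1::real:] + degree q" by (rule degree_mult_le)
          ultimately show "degree p \<le> t" using q(1) t2 by simp
          show "poly p 0 = 0" by (simp add: p_def)
          show "\<forall>x\<in>{0..\<alpha>}. \<bar>poly fstar x\<bar> = M \<longrightarrow> poly p x * poly fstar x > 0"
          proof (intro ballI impI)
            fix x assume x: "x \<in> {0..\<alpha>}" "\<bar>poly fstar x\<bar> = M"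
            have "w - x > 0" using x ab unfolding w_def by simp
            then have "x * (w - x) > 0" using Epos[OF x] by (rule mult_pos_pos[rotated])
            moreover have "poly q x * poly fstar x > 0" using q(2) x by blast
            ultimately have "(x * (w - x)) * (poly q x * poly fstar x) > 0" by (rule mult_pos_pos)
            then show "poly p x * poly fstar x > 0" by (simp add: p_def algebra_simps)
          qed
          show "\<forall>u\<in>{\<beta>..1}. poly p u \<le> 0"
          proof
            fix u assume u: "u \<in> {\<beta>..1}"
            have "poly q u > 0" using qs[OF u] qp by (simp add: zero_less_mult_iff)
            moreover have "u > 0" using u a ab by simp
            moreover have "w - u < 0" using u ab unfolding w_def by simp
            ultimately have "(u * poly q u) * (w - u) < 0" by (intro mult_pos_neg mult_pos_pos)
            then show "poly p u \<le> 0" by (simp add: p_def algebra_simps)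
          qed
        qed
      qed
      obtain \<epsilon> where eps: "\<epsilon> > 0" "\<forall>x\<in>{0..\<alpha>}. \<bar>poly fstar x - \<epsilon> * poly p x\<bar> < M"
        using perturb[of \<alpha> M fstar p] a Mpos xm(3) p(3) by auto
      define g where "g = fstar - smult \<epsilon> p"
      have pg: "poly g x = poly fstar x - \<epsilon> * poly p x" for x by (simp add: g_def)
      have gge: "poly g u \<ge> poly fstar u" if "u \<in> {\<beta>..1}" for u
      proof -
        have "\<epsilon> * poly p u \<le> 0" using p(4) that eps(1) by (simp add: mult_nonneg_nonpos)
        then show ?thesis by (simp add: pg)
      qed
      define c where "c = poly g 1"
      have c1: "c \<ge> 1" using gge[of 1] f(3) b1 ab a unfolding c_def by simp
      define h where "h = smult (1 / c) g"
      have ph: "poly h x = poly g x / c" for x by (simp add: h_def)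
      have hP: "h \<in> Pt' t"
      proof -
        have "degree g \<le> t" unfolding g_def
          by (rule degree_diff_le[OF f(1)]) (rule order_trans[OF degree_smult_le p(1)])
        then have "degree h \<le> t" unfolding h_def by (rule order_trans[OF degree_smult_le])
        moreover have "poly h 0 = 0" using f(2) p(2) by (simp add: ph pg)
        moreover have "poly h 1 = 1" using c1 by (simp add: ph c_def)
        ultimately show ?thesis unfolding Pt'_def by simp
      qed
      obtain xh where xh: "xh \<in> {0..\<alpha>}" "max_abs_on h 0 \<alpha> = \<bar>poly h xh\<bar>"
        using attain_max[of 0 \<alpha> h] a by auto
      have maxh: "max_abs_on h 0 \<alpha> < M / c" "max_abs_on h 0 \<alpha> \<ge> 0"
      proof -
        have "\<bar>poly g xh\<bar> < M" using eps(2) xh(1) by (simp add: pg)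
        then have "\<bar>poly g xh\<bar> / c < M / c" using c1 by (simp add: divide_strict_right_mono)
        then show "max_abs_on h 0 \<alpha> < M / c" using xh(2) c1 by (simp add: ph)
        show "max_abs_on h 0 \<alpha> \<ge> 0" using xh(2) by simp
      qed
      obtain xl where xl: "xl \<in> {\<beta>..1}" "min_abs_on h \<beta> 1 = \<bar>poly h xl\<bar>"
        using attain_min[of \<beta> 1 h] b1 by auto
      have minh: "min_abs_on h \<beta> 1 \<ge> m / c"
      proof -
        have "m \<le> \<bar>poly fstar xl\<bar>" using xn(3) xl(1) by blast
        also have "\<dots> = poly fstar xl" using fpos[OF xl(1)] by simp
        also have "\<dots> \<le> poly g xl" using gge[OF xl(1)] .
        also have "\<dots> \<le> \<bar>poly g xl\<bar>" by simp
        finally have "m / c \<le> \<bar>poly g xl\<bar> / c" using c1 by (simp add: divide_right_mono)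
        then show ?thesis using xl(2) c1 by (simp add: ph)
      qed
      have mcpos: "m / c > 0" using mpos c1 by simp
      then have minhnz: "min_abs_on h \<beta> 1 \<noteq> 0" using minh by linarith
      have objh: "objective \<alpha> \<beta> h = ereal (max_abs_on h 0 \<alpha> / min_abs_on h \<beta> 1)"
        using minhnz unfolding objective_def by simp
      have "max_abs_on h 0 \<alpha> / min_abs_on h \<beta> 1 \<le> max_abs_on h 0 \<alpha> / (m / c)"
      proof (rule divide_left_mono[OF minh maxh(2)])
        have mh: "min_abs_on h \<beta> 1 > 0" using mcpos minh by linarith
        show "0 < min_abs_on h \<beta> 1 * (m / c)" by (rule mult_pos_pos[OF mh mcpos])
      qed
      also have "\<dots> = (max_abs_on h 0 \<alpha> * c) / m" using c1 by simp
      also have "\<dots> < M / m"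
      proof -
        have "max_abs_on h 0 \<alpha> * c < M" using maxh(1) c1 by (simp add: field_simps)
        then show ?thesis using mpos by (simp add: divide_strict_right_mono)
      qed
      finally have "objective \<alpha> \<beta> h < objective \<alpha> \<beta> fstar" unfolding objh objf by simp
      moreover have "objective \<alpha> \<beta> fstar \<le> objective \<alpha> \<beta> h" using opt hP by blast
      ultimately show False by simp
    qed
  qed
qed

end
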